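(* Let $(\sigma_t)_{t\ge0}$ and $(\sigma^{(n)}_t)_{t\ge0}$, $n\in\mathbb{N}$, be families of finite Borel measures on $\mathbb{R}$ with $\sigma_0=\sigma^{(n)}_0=0$ such that $t\mapsto\sigma_t(B)$ and $t\mapsto\sigma^{(n)}_t(B)$ are continuous and non-decreasing for every Borel $B\subset\mathbb{R}$. Let $\Sigma$ (resp. $\Sigma^{(n)}$) be the unique $\sigma$-finite Borel measure on $\mathbb{R}\times[0,+\infty)$ such that $\Sigma(B\times(s,t])=\sigma_t(B)-\sigma_s(B)$ for all Borel $B$ and $0\le s\le t$, and $\Sigma(\mathbb{R}\times[0,t])<\infty$, $\Sigma(\mathbb{R}\times\{t\})=0$ for all $t\ge0$ (resp. the same with $\sigma^{(n)}$). Then $\sigma^{(n)}_t\to\sigma_t$ weakly for every $t\ge0$ if and only if $\Sigma^{(n)}|_{\mathbb{R}\times[0,T]}\to\Sigma|_{\mathbb{R}\times[0,T]}$ weakly for every $T>0$.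
   Context: Weak convergence of finite Borel measures means convergence of integrals of every bounded continuous function. $\Sigma|_{\mathbb{R}\times[0,T]}$ denotes the restriction of $\Sigma$ to $\mathbb{R}\times[0,T]$, a finite measure. *)

theory Defs
  imports "HOL-Analysis.Analysis"
begin

definition weak_conv_finite ::
  "(nat \<Rightarrow> 'a::topological_space measure) \<Rightarrow> 'a measure \<Rightarrow> bool" where
  "weak_conv_finite M M' \<longleftrightarrow>
     (\<forall>f::'a \<Rightarrow> real. continuous_on (space M') f \<and> bounded (f ` space M') \<longrightarrow>
        (\<lambda>n. integral\<^sup>L (M n) f) \<longlonglongrightarrow> integral\<^sup>L M' f)"

definition admissible_family :: "(real \<Rightarrow> real measure) \<Rightarrow> bool" where
  "admissible_family \<sigma> \<longleftrightarrow>
     (\<forall>t\<ge>0. sets (\<sigma> t) = sets borel \<and> finite_measure (\<sigma> t)) \<and>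
     (\<forall>B\<in>sets borel. emeasure (\<sigma> 0) B = 0) \<and>
     (\<forall>B\<in>sets borel. continuous_on {0..} (\<lambda>t. measure (\<sigma> t) B)
                      \<and> mono_on {0..} (\<lambda>t. measure (\<sigma> t) B))"

definition associated_space_time_measure ::
  "(real \<Rightarrow> real measure) \<Rightarrow> (real \<times> real) measure \<Rightarrow> bool" where
  "associated_space_time_measure \<sigma> \<Sigma> \<longleftrightarrow>
     sets \<Sigma> = sets (restrict_space borel (UNIV \<times> {0..})) \<and>
     sigma_finite_measure \<Sigma> \<and>
     (\<forall>B\<in>sets borel. \<forall>s t. 0 \<le> s \<and> s \<le> t \<longrightarrow>
        emeasure \<Sigma> (B \<times> {s<..t}) = emeasure (\<sigma> t) B - emeasure (\<sigma> s) B) \<and>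
     (\<forall>t\<ge>0. emeasure \<Sigma> (UNIV \<times> {0..t}) < \<infinity>) \<and>
     (\<forall>t\<ge>0. emeasure \<Sigma> (UNIV \<times> {t}) = 0)"

end

theory Submission
  imports Defs
begin

lemma st_space:
  assumes "associated_space_time_measure \<sigma> \<Sigma>"
  shows "space \<Sigma> = UNIV \<times> {0..}"
proof -
  have "sets \<Sigma> = sets (restrict_space borel (UNIV \<times> {0::real..}))"
    using assms unfolding associated_space_time_measure_def by blast
  then have "space \<Sigma> = space (restrict_space borel (UNIV \<times> {0::real..}))"
    by (rule sets_eq_imp_space_eq)
  then show ?thesis by (simp add: space_restrict_space)
qed

lemma st_sets:
  assumes "associated_space_time_measure \<sigma> \<Sigma>" "A \<in> sets borel" "A \<subseteq> UNIV \<times> {0..}"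
  shows "A \<in> sets \<Sigma>"
proof -
  have "sets \<Sigma> = sets (restrict_space borel (UNIV \<times> {0::real..}))"
    using assms unfolding associated_space_time_measure_def by blast
  moreover have "(UNIV \<times> {0::real..}) \<inter> space borel \<in> sets (borel :: (real\<times>real) measure)"
    by (simp add: borel_Times)
  ultimately show ?thesis using assms sets_restrict_space_iff by blast
qed

lemma st_meas:
  assumes "associated_space_time_measure \<sigma> \<Sigma>" "h \<in> borel_measurable borel"
  shows "h \<in> borel_measurable (restrict_space \<Sigma> A)"
proof -
  have "sets \<Sigma> = sets (restrict_space borel (UNIV \<times> {0::real..}))"
    using assms unfolding associated_space_time_measure_def by blast
  moreover have "h \<in> borel_measurable (restrict_space borel (UNIV \<times> {0::real..}))"
    using assms(2) by (rule measurable_restrict_space1)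
  ultimately have "h \<in> borel_measurable \<Sigma>"
    using measurable_cong_sets by blast
  then show ?thesis by (rule measurable_restrict_space1)
qed

lemma st_meas_cont:
  assumes "associated_space_time_measure \<sigma> \<Sigma>" "continuous_on (UNIV \<times> {0..T}) f"
  shows "f \<in> borel_measurable (restrict_space \<Sigma> (UNIV \<times> {0..T}))"
proof -
  have "sets \<Sigma> = sets (restrict_space borel (UNIV \<times> {0::real..}))"
    using assms unfolding associated_space_time_measure_def by blast
  then have "sets (restrict_space \<Sigma> (UNIV \<times> {0..T})) =
     sets (restrict_space (restrict_space borel (UNIV \<times> {0::real..})) (UNIV \<times> {0..T}))"
    by (rule sets_restrict_space_cong)
  also have "\<dots> = sets (restrict_space borel ((UNIV \<times> {0::real..}) \<inter> (UNIV \<times> {0..T})))"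
    by (subst restrict_restrict_space) (auto simp: borel_Times)
  also have "(UNIV \<times> {0::real..}) \<inter> (UNIV \<times> {0..T}) = UNIV \<times> {0..T}" by auto
  finally have "sets (restrict_space \<Sigma> (UNIV \<times> {0..T})) = sets (restrict_space borel (UNIV \<times> {0..T}))" .
  moreover have "f \<in> borel_measurable (restrict_space borel (UNIV \<times> {0..T}))"
    using assms(2) by (rule borel_measurable_continuous_on_restrict)
  ultimately show ?thesis using measurable_cong_sets by blast
qed

lemma st_emeas:
  assumes "admissible_family \<sigma>" "associated_space_time_measure \<sigma> \<Sigma>" "B \<in> sets borel" "0 \<le> b"
  shows "emeasure \<Sigma> (B \<times> {0..b}) = emeasure (\<sigma> b) B"
proof -
  have s1: "B \<times> {0} \<in> sets \<Sigma>" "B \<times> {0<..b} \<in> sets \<Sigma>" "UNIV \<times> {0} \<in> sets \<Sigma>"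
    using assms by (auto intro!: st_sets borel_Times)
  have "emeasure \<Sigma> (B \<times> {0}) \<le> emeasure \<Sigma> (UNIV \<times> {0})"
    using s1 by (intro emeasure_mono) auto
  also have "\<dots> = 0" using assms(2) unfolding associated_space_time_measure_def by auto
  finally have z: "emeasure \<Sigma> (B \<times> {0}) = 0" by simp
  have eq: "B \<times> {0..b} = B \<times> {0} \<union> B \<times> {0<..b}" using assms(4) by auto
  have d: "B \<times> {0} \<inter> B \<times> {0<..b} = {}" by auto
  have "emeasure \<Sigma> (B \<times> {0..b}) = emeasure \<Sigma> (B \<times> {0} \<union> B \<times> {0<..b})" using eq by simp
  also have "\<dots> = emeasure \<Sigma> (B \<times> {0}) + emeasure \<Sigma> (B \<times> {0<..b})"
    using plus_emeasure[OF s1(1) s1(2) d] by simp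
  also have "\<dots> = emeasure (\<sigma> b) B - emeasure (\<sigma> 0) B"
    using z assms unfolding associated_space_time_measure_def by auto
  also have "emeasure (\<sigma> 0) B = 0" using assms unfolding admissible_family_def by auto
  finally show ?thesis by simp
qed

lemma st_distr:
  assumes "admissible_family \<sigma>" "associated_space_time_measure \<sigma> \<Sigma>" "0 \<le> b"
  shows "distr (restrict_space \<Sigma> (UNIV \<times> {0..b})) borel fst = \<sigma> b"
proof (rule measure_eqI)
  show "sets (distr (restrict_space \<Sigma> (UNIV \<times> {0..b})) borel fst) = sets (\<sigma> b)"
    using assms unfolding admissible_family_def by auto
next
  fix A assume A: "A \<in> sets (distr (restrict_space \<Sigma> (UNIV \<times> {0..b})) borel fst)"
  then have Ab: "A \<in> sets borel" by simp
  have fm: "fst \<in> borel_measurable (restrict_space \<Sigma> (UNIV \<times> {0..b}))"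
    using assms(2) by (rule st_meas) (intro borel_measurable_continuous_onI continuous_intros)
  have sp: "space (restrict_space \<Sigma> (UNIV \<times> {0..b})) = UNIV \<times> {0..b}"
    unfolding space_restrict_space st_space[OF assms(2)] by (simp add: Times_Int_Times)
  have in_s: "(UNIV \<times> {0..b}) \<inter> space \<Sigma> \<in> sets \<Sigma>"
    unfolding st_space[OF assms(2)] Times_Int_Times
    by (rule st_sets[OF assms(2)]) (auto intro: borel_Times)
  have "emeasure (distr (restrict_space \<Sigma> (UNIV \<times> {0..b})) borel fst) A
      = emeasure (restrict_space \<Sigma> (UNIV \<times> {0..b})) (A \<times> {0..b})"
    using fm Ab by (simp add: emeasure_distr sp vimage_fst Times_Int_Times)
  also have "\<dots> = emeasure \<Sigma> (A \<times> {0..b})"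
    using in_s by (intro emeasure_restrict_space) auto
  also have "\<dots> = emeasure (\<sigma> b) A" using st_emeas assms Ab by blast
  finally show "emeasure (distr (restrict_space \<Sigma> (UNIV \<times> {0..b})) borel fst) A = emeasure (\<sigma> b) A" .
qed


lemma st_sp:
  assumes "associated_space_time_measure \<sigma> \<Sigma>"
  shows "space (restrict_space \<Sigma> (UNIV \<times> {0..b})) = UNIV \<times> {0..b}"
  unfolding space_restrict_space st_space[OF assms] by (simp add: Times_Int_Times)

lemma st_in:
  assumes "associated_space_time_measure \<sigma> \<Sigma>"
  shows "(UNIV \<times> {0..b}) \<inter> space \<Sigma> \<in> sets \<Sigma>"
    unfolding st_space[OF assms] Times_Int_Times
    by (rule st_sets[OF assms]) (auto intro: borel_Times)

lemma st_finite:
  assumes "associated_space_time_measure \<sigma> \<Sigma>" "0 \<le> b"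
  shows "finite_measure (restrict_space \<Sigma> (UNIV \<times> {0..b}))"
proof (rule finite_measureI)
  have "emeasure (restrict_space \<Sigma> (UNIV \<times> {0..b})) (space (restrict_space \<Sigma> (UNIV \<times> {0..b})))
     = emeasure \<Sigma> (UNIV \<times> {0..b})"
    unfolding st_sp[OF assms(1)] by (rule emeasure_restrict_space[OF st_in[OF assms(1)]]) simp
  also have "\<dots> < \<infinity>" using assms unfolding associated_space_time_measure_def by auto
  finally show "emeasure (restrict_space \<Sigma> (UNIV \<times> {0..b})) (space (restrict_space \<Sigma> (UNIV \<times> {0..b}))) \<noteq> \<infinity>"
    by simp
qed

lemma st_int_fst:
  assumes "admissible_family \<sigma>" "associated_space_time_measure \<sigma> \<Sigma>" "0 \<le> b"
    and "(\<phi>::real\<Rightarrow>real) \<in> borel_measurable borel"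
  shows "integral\<^sup>L (restrict_space \<Sigma> (UNIV \<times> {0..b})) (\<lambda>p. \<phi> (fst p)) = integral\<^sup>L (\<sigma> b) \<phi>"
proof -
  have fm: "fst \<in> borel_measurable (restrict_space \<Sigma> (UNIV \<times> {0..b}))"
    using assms(2) by (rule st_meas) (intro borel_measurable_continuous_onI continuous_intros)
  have "integral\<^sup>L (\<sigma> b) \<phi> = integral\<^sup>L (distr (restrict_space \<Sigma> (UNIV \<times> {0..b})) borel fst) \<phi>"
    using st_distr[OF assms(1-3)] by simp
  also have "\<dots> = integral\<^sup>L (restrict_space \<Sigma> (UNIV \<times> {0..b})) (\<lambda>p. \<phi> (fst p))"
    using fm assms(4) by (rule integral_distr)
  finally show ?thesis by simp
qed

lemma st_int_ind:
  assumes "admissible_family \<sigma>" "associated_space_time_measure \<sigma> \<Sigma>" "0 \<le> b" "b \<le> T"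
    and "(\<phi>::real\<Rightarrow>real) \<in> borel_measurable borel"
  shows "integral\<^sup>L (restrict_space \<Sigma> (UNIV \<times> {0..T})) (\<lambda>p. \<phi> (fst p) * indicator {..b} (snd p))
       = integral\<^sup>L (\<sigma> b) \<phi>"
proof -
  have "integral\<^sup>L (restrict_space \<Sigma> (UNIV \<times> {0..T})) (\<lambda>p. \<phi> (fst p) * indicator {..b} (snd p))
     = integral\<^sup>L \<Sigma> (\<lambda>p. indicator (UNIV \<times> {0..T}) p *\<^sub>R (\<phi> (fst p) * indicator {..b} (snd p)))"
    by (rule integral_restrict_space[OF st_in[OF assms(2)]])
  also have "\<dots> = integral\<^sup>L \<Sigma> (\<lambda>p. indicator (UNIV \<times> {0..b}) p *\<^sub>R \<phi> (fst p))"
  proof (rule Bochner_Integration.integral_cong[OF refl])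
    fix p assume "p \<in> space \<Sigma>"
    then have "snd p \<ge> 0" using st_space[OF assms(2)] by (auto simp: mem_Times_iff)
    then show "indicator (UNIV \<times> {0..T}) p *\<^sub>R (\<phi> (fst p) * indicator {..b} (snd p))
        = indicator (UNIV \<times> {0..b}) p *\<^sub>R \<phi> (fst p)"
      using assms(4) by (simp add: indicator_def mem_Times_iff)
  qed
  also have "\<dots> = integral\<^sup>L (restrict_space \<Sigma> (UNIV \<times> {0..b})) (\<lambda>p. \<phi> (fst p))"
    by (rule integral_restrict_space[OF st_in[OF assms(2)], symmetric])
  also have "\<dots> = integral\<^sup>L (\<sigma> b) \<phi>" by (rule st_int_fst[OF assms(1-3) assms(5)])
  finally show ?thesis .
qed

lemma st_integrable:
  assumes "associated_space_time_measure \<sigma> \<Sigma>" "0 \<le> T"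
    and "(g::real\<times>real\<Rightarrow>real) \<in> borel_measurable (restrict_space \<Sigma> (UNIV \<times> {0..T}))"
    and "\<And>p. p \<in> UNIV \<times> {0..T} \<Longrightarrow> norm (g p) \<le> C"
  shows "integrable (restrict_space \<Sigma> (UNIV \<times> {0..T})) g"
proof (rule finite_measure.integrable_const_bound[where B=C])
  show "finite_measure (restrict_space \<Sigma> (UNIV \<times> {0..T}))" by (rule st_finite[OF assms(1,2)])
  show "AE x in restrict_space \<Sigma> (UNIV \<times> {0..T}). norm (g x) \<le> C"
    by (rule AE_I2) (metis assms(4) st_sp[OF assms(1)])
qed (rule assms(3))

lemma adm_zero:
  assumes "admissible_family \<sigma>"
  shows "\<sigma> 0 = null_measure borel"
proof (rule measure_eqI)
  show "sets (\<sigma> 0) = sets (null_measure borel)" using assms unfolding admissible_family_def by auto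
  fix A assume "A \<in> sets (\<sigma> 0)"
  then show "emeasure (\<sigma> 0) A = emeasure (null_measure borel) A"
    using assms unfolding admissible_family_def by auto
qed


definition tg :: "real \<Rightarrow> nat \<Rightarrow> nat \<Rightarrow> real" where
  "tg T K j = T * real j / real K"

definition wt :: "real \<Rightarrow> nat \<Rightarrow> nat \<Rightarrow> real \<Rightarrow> real" where
  "wt T K j s = (if j = 0 then indicator {..tg T K 0} s
                 else indicator {..tg T K j} s - indicator {..tg T K (j - 1)} s)"

lemma tg_mono: "0 \<le> T \<Longrightarrow> i \<le> j \<Longrightarrow> tg T K i \<le> tg T K j"
  unfolding tg_def by (intro divide_right_mono mult_left_mono) auto

lemma tg_nonneg: "0 \<le> T \<Longrightarrow> 0 \<le> tg T K j"
  unfolding tg_def by simp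

lemma tg_le: "0 \<le> T \<Longrightarrow> j \<le> K \<Longrightarrow> tg T K j \<le> T"
proof -
  assume a: "0 \<le> T" "j \<le> K"
  show ?thesis
  proof (cases "K = 0")
    case True then show ?thesis using a by (simp add: tg_def)
  next
    case False
    then have "T * real j / real K \<le> T * real K / real K"
      using a by (intro divide_right_mono mult_left_mono) auto
    then show ?thesis using False by (simp add: tg_def)
  qed
qed

lemma tg_K: "0 < K \<Longrightarrow> tg T K K = T"
  unfolding tg_def by simp

lemma tg_step: "0 < j \<Longrightarrow> tg T K j - tg T K (j - 1) = T / real K"
proof -
  assume "0 < j"
  then have "real (j - 1) = real j - 1" by (simp add: of_nat_diff)
  then show ?thesis unfolding tg_def by (simp add: right_diff_distrib diff_divide_distrib)
qed

lemma wt_nonneg: "0 \<le> T \<Longrightarrow> 0 \<le> wt T K j s"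
  using tg_mono[of T "j - 1" j K] unfolding wt_def by (auto simp: indicator_def)

lemma wt_le1: "wt T K j s \<le> 1"
  unfolding wt_def by (auto simp: indicator_def)

lemma wt_01: "0 \<le> T \<Longrightarrow> wt T K j s = 0 \<or> wt T K j s = 1"
  using tg_mono[of T "j - 1" j K] unfolding wt_def by (auto simp: indicator_def)

lemma wt_near:
  assumes "0 \<le> T" "0 \<le> s" "wt T K j s \<noteq> 0"
  shows "\<bar>s - tg T K j\<bar> \<le> T / real K"
proof (cases "j = 0")
  case True
  then have "s \<le> tg T K 0" using assms(3) unfolding wt_def by (auto simp: indicator_def split: if_splits)
  then have "s = 0" using assms(2) by (simp add: tg_def)
  then show ?thesis using True assms(1) by (simp add: tg_def)
next
  case False
  have w: "wt T K j s = indicator {..tg T K j} s - indicator {..tg T K (j - 1)} s"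
    using False unfolding wt_def by simp
  have m: "tg T K (j - 1) \<le> tg T K j" using tg_mono[OF assms(1), of "j - 1" j K] by simp
  have "s \<le> tg T K j"
  proof (rule ccontr)
    assume "\<not> s \<le> tg T K j"
    then have "\<not> s \<le> tg T K (j - 1)" using m by linarith
    with \<open>\<not> s \<le> tg T K j\<close> have "wt T K j s = 0" unfolding w by (simp add: indicator_def)
    with assms(3) show False by simp
  qed
  moreover have "\<not> s \<le> tg T K (j - 1)"
  proof
    assume "s \<le> tg T K (j - 1)"
    with \<open>s \<le> tg T K j\<close> have "wt T K j s = 0" unfolding w by (simp add: indicator_def)
    with assms(3) show False by simp
  qed
  moreover have "tg T K j - tg T K (j - 1) = T / real K" using False by (intro tg_step) simp
  ultimately show ?thesis by auto
qed

lemma wt_sum: "(\<Sum>j\<le>n. wt T K j s) = indicator {..tg T K n} s"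
proof (induction n)
  case 0 then show ?case by (simp add: wt_def)
next
  case (Suc n) then show ?case by (simp add: wt_def)
qed

lemma wt_meas: "wt T K j \<in> borel_measurable borel"
  unfolding wt_def by measurable


lemma st_ind_integrable:
  assumes "associated_space_time_measure \<sigma> \<Sigma>" "0 \<le> T"
    and "continuous_on UNIV (\<phi>::real\<Rightarrow>real)" "\<And>x. \<bar>\<phi> x\<bar> \<le> C"
  shows "integrable (restrict_space \<Sigma> (UNIV \<times> {0..T})) (\<lambda>p. \<phi> (fst p) * indicator {..b} (snd p))"
proof (rule st_integrable[OF assms(1,2)])
  have m1: "(\<lambda>p::real\<times>real. \<phi> (fst p)) \<in> borel_measurable borel"
    by (intro borel_measurable_continuous_onI continuous_on_compose2[OF assms(3)] continuous_intros) auto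
  have e: "(\<lambda>p::real\<times>real. indicator {..b} (snd p)::real) = indicator (UNIV \<times> {..b})"
    by (auto simp: indicator_def fun_eq_iff)
  have m2: "(\<lambda>p::real\<times>real. indicator {..b} (snd p)::real) \<in> borel_measurable borel"
    unfolding e by (intro borel_measurable_indicator borel_Times) auto
  have "(\<lambda>p. \<phi> (fst p) * indicator {..b} (snd p)) \<in> borel_measurable (borel :: (real\<times>real) measure)"
    using m1 m2 by (rule borel_measurable_times)
  then show "(\<lambda>p. \<phi> (fst p) * indicator {..b} (snd p)) \<in> borel_measurable (restrict_space \<Sigma> (UNIV \<times> {0..T}))"
    using assms(1) by (intro st_meas)
  fix p :: "real \<times> real"
  show "norm (\<phi> (fst p) * indicator {..b} (snd p)) \<le> C"
    using assms(4)[of "fst p"] by (auto simp: indicator_def abs_mult)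
qed

lemma st_term:
  assumes "admissible_family \<sigma>" "associated_space_time_measure \<sigma> \<Sigma>" "0 \<le> T" "j \<le> K"
    and "continuous_on UNIV (\<phi>::real\<Rightarrow>real)" "\<And>x. \<bar>\<phi> x\<bar> \<le> C"
  shows "integral\<^sup>L (restrict_space \<Sigma> (UNIV \<times> {0..T})) (\<lambda>p. \<phi> (fst p) * wt T K j (snd p))
       = (if j = 0 then integral\<^sup>L (\<sigma> (tg T K 0)) \<phi>
          else integral\<^sup>L (\<sigma> (tg T K j)) \<phi> - integral\<^sup>L (\<sigma> (tg T K (j - 1))) \<phi>)"
proof -
  have pm: "\<phi> \<in> borel_measurable borel"
    using assms(5) by (rule borel_measurable_continuous_onI)
  show ?thesis
  proof (cases "j = 0")
    case True
    then show ?thesis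
      using st_int_ind[OF assms(1,2) tg_nonneg[OF assms(3)] tg_le[OF assms(3)] pm, of 0 K]
      by (simp add: wt_def)
  next
    case False
    have "integral\<^sup>L (restrict_space \<Sigma> (UNIV \<times> {0..T})) (\<lambda>p. \<phi> (fst p) * wt T K j (snd p))
      = integral\<^sup>L (restrict_space \<Sigma> (UNIV \<times> {0..T}))
          (\<lambda>p. \<phi> (fst p) * indicator {..tg T K j} (snd p) - \<phi> (fst p) * indicator {..tg T K (j - 1)} (snd p))"
      using False by (simp add: wt_def right_diff_distrib)
    also have "\<dots> = integral\<^sup>L (restrict_space \<Sigma> (UNIV \<times> {0..T})) (\<lambda>p. \<phi> (fst p) * indicator {..tg T K j} (snd p))
        - integral\<^sup>L (restrict_space \<Sigma> (UNIV \<times> {0..T})) (\<lambda>p. \<phi> (fst p) * indicator {..tg T K (j - 1)} (snd p))"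
      by (intro Bochner_Integration.integral_diff st_ind_integrable[OF assms(2,3,5,6)])
    also have "\<dots> = integral\<^sup>L (\<sigma> (tg T K j)) \<phi> - integral\<^sup>L (\<sigma> (tg T K (j - 1))) \<phi>"
      using st_int_ind[OF assms(1,2) tg_nonneg[OF assms(3)] tg_le[OF assms(3)] pm, of j K]
        st_int_ind[OF assms(1,2) tg_nonneg[OF assms(3)] tg_le[OF assms(3)] pm, of "j - 1" K] assms(4)
      by simp
    finally show ?thesis using False by simp
  qed
qed


lemma st_pointwise:
  assumes T: "0 < T" and K: "0 < K" and s: "0 \<le> s" "s \<le> T"
    and P: "\<And>j. j \<le> K \<Longrightarrow> \<bar>s - tg T K j\<bar> \<le> T / real K \<Longrightarrow> \<bar>F - G j\<bar> \<le> E"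
  shows "\<bar>F - (\<Sum>j\<le>K. G j * wt T K j s)\<bar> \<le> E"
proof -
  have W1: "(\<Sum>j\<le>K. wt T K j s) = 1"
    using s tg_K[OF K, of T] by (simp add: wt_sum indicator_def)
  have "F - (\<Sum>j\<le>K. G j * wt T K j s) = F * (\<Sum>j\<le>K. wt T K j s) - (\<Sum>j\<le>K. G j * wt T K j s)"
    using W1 by simp
  also have "\<dots> = (\<Sum>j\<le>K. (F - G j) * wt T K j s)"
    by (simp add: sum_distrib_left sum_subtractf left_diff_distrib)
  finally have eq: "F - (\<Sum>j\<le>K. G j * wt T K j s) = (\<Sum>j\<le>K. (F - G j) * wt T K j s)" .
  have "\<bar>\<Sum>j\<le>K. (F - G j) * wt T K j s\<bar> \<le> (\<Sum>j\<le>K. \<bar>(F - G j) * wt T K j s\<bar>)"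
    by (rule sum_abs)
  also have "\<dots> \<le> (\<Sum>j\<le>K. E * wt T K j s)"
  proof (rule sum_mono)
    fix j assume j: "j \<in> {..K}"
    show "\<bar>(F - G j) * wt T K j s\<bar> \<le> E * wt T K j s"
    proof (cases "wt T K j s = 0")
      case True then show ?thesis by simp
    next
      case False
      then have w1: "wt T K j s = 1" using wt_01[of T K j s] T by auto
      have "\<bar>s - tg T K j\<bar> \<le> T / real K" using wt_near[of T s K j] T s False by auto
      then have "\<bar>F - G j\<bar> \<le> E" using P j by auto
      then show ?thesis using w1 by simp
    qed
  qed
  also have "\<dots> = E" using W1 by (simp add: sum_distrib_left[symmetric])
  finally show ?thesis using eq by simp
qed

lemma st_approx:
  fixes f :: "real \<times> real \<Rightarrow> real" and h :: "real \<Rightarrow> real"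
  assumes adm: "admissible_family \<sigma>" and assoc: "associated_space_time_measure \<sigma> \<Sigma>"
    and T: "0 < T" and K: "0 < K"
    and cf: "continuous_on (UNIV \<times> {0..T}) f"
    and fb: "\<And>p. p \<in> UNIV \<times> {0..T} \<Longrightarrow> \<bar>f p\<bar> \<le> M"
    and hc: "continuous_on UNIV h" and h0: "\<And>x. 0 \<le> h x" and h1: "\<And>x. h x \<le> 1"
    and eps: "0 \<le> \<epsilon>"
    and P: "\<And>x s j. 0 \<le> s \<Longrightarrow> s \<le> T \<Longrightarrow> j \<le> K \<Longrightarrow> \<bar>s - tg T K j\<bar> \<le> T / real K \<Longrightarrow>
              \<bar>f (x, s) - f (x, tg T K j)\<bar> \<le> \<epsilon> + 2 * M * h x"
  shows "\<bar>integral\<^sup>L (restrict_space \<Sigma> (UNIV \<times> {0..T})) f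
          - (\<Sum>j\<le>K. integral\<^sup>L (restrict_space \<Sigma> (UNIV \<times> {0..T})) (\<lambda>p. f (fst p, tg T K j) * wt T K j (snd p)))\<bar>
         \<le> \<epsilon> * integral\<^sup>L (\<sigma> T) (\<lambda>x. 1) + 2 * M * integral\<^sup>L (\<sigma> T) h"
proof -
  let ?R = "restrict_space \<Sigma> (UNIV \<times> {0..T})"
  have T0: "0 \<le> T" using T by simp
  have M0: "0 \<le> M" using fb[of "(0, 0)"] T by auto
  have sp: "space ?R = UNIV \<times> {0..T}" by (rule st_sp[OF assoc])
  have fi: "integrable ?R f"
    by (rule st_integrable[OF assoc T0 st_meas_cont[OF assoc cf]]) (use fb in auto)
  have ti: "integrable ?R (\<lambda>p. f (fst p, tg T K j) * wt T K j (snd p))" if j: "j \<le> K" for j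
  proof (rule st_integrable[OF assoc T0])
    have c: "continuous_on UNIV (\<lambda>x. f (x, tg T K j))"
      by (rule continuous_on_compose2[OF cf, of UNIV "\<lambda>x. (x, tg T K j)"])
         (auto intro!: continuous_intros simp: tg_nonneg[OF T0] tg_le[OF T0 j])
    have m1: "(\<lambda>p::real\<times>real. f (fst p, tg T K j)) \<in> borel_measurable borel"
      by (intro borel_measurable_continuous_onI continuous_on_compose2[OF c] continuous_intros) auto
    have ms: "snd \<in> borel_measurable (borel :: (real\<times>real) measure)"
      by (intro borel_measurable_continuous_onI continuous_intros)
    have m2: "(\<lambda>p::real\<times>real. wt T K j (snd p)) \<in> borel_measurable borel"
      using measurable_compose[OF ms wt_meas] by (simp add: comp_def)
    have "(\<lambda>p. f (fst p, tg T K j) * wt T K j (snd p)) \<in> borel_measurable (borel :: (real\<times>real) measure)"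
      using m1 m2 by (rule borel_measurable_times)
    then show "(\<lambda>p. f (fst p, tg T K j) * wt T K j (snd p)) \<in> borel_measurable ?R"
      using assoc by (intro st_meas)
    fix p :: "real \<times> real"
    have "\<bar>f (fst p, tg T K j)\<bar> \<le> M" using fb tg_nonneg[OF T0] tg_le[OF T0 j] by auto
    moreover have "0 \<le> wt T K j (snd p)" "wt T K j (snd p) \<le> 1" using wt_nonneg[OF T0] wt_le1 by auto
    ultimately show "norm (f (fst p, tg T K j) * wt T K j (snd p)) \<le> M"
      by (simp add: abs_mult) (metis M0 mult_mono mult.right_neutral abs_ge_zero)
  qed
  have gi: "integrable ?R (\<lambda>p. \<Sum>j\<le>K. f (fst p, tg T K j) * wt T K j (snd p))"
    by (rule Bochner_Integration.integrable_sum) (use ti in auto)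
  have hm: "(\<lambda>p::real\<times>real. h (fst p)) \<in> borel_measurable borel"
    by (intro borel_measurable_continuous_onI continuous_on_compose2[OF hc] continuous_intros) auto
  have hi: "integrable ?R (\<lambda>p. h (fst p))"
    by (rule st_integrable[OF assoc T0 st_meas[OF assoc hm]]) (use h0 h1 in auto)
  have oi: "integrable ?R (\<lambda>p. 1::real)"
    by (rule st_integrable[OF assoc T0 st_meas[OF assoc]]) auto
  have "(\<Sum>j\<le>K. integral\<^sup>L ?R (\<lambda>p. f (fst p, tg T K j) * wt T K j (snd p)))
      = integral\<^sup>L ?R (\<lambda>p. \<Sum>j\<le>K. f (fst p, tg T K j) * wt T K j (snd p))"
    by (rule Bochner_Integration.integral_sum[symmetric]) (use ti in auto)
  then have "integral\<^sup>L ?R f - (\<Sum>j\<le>K. integral\<^sup>L ?R (\<lambda>p. f (fst p, tg T K j) * wt T K j (snd p)))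
      = integral\<^sup>L ?R (\<lambda>p. f p - (\<Sum>j\<le>K. f (fst p, tg T K j) * wt T K j (snd p)))"
    using Bochner_Integration.integral_diff[OF fi gi] by simp
  also have "\<bar>\<dots>\<bar> \<le> integral\<^sup>L ?R (\<lambda>p. \<bar>f p - (\<Sum>j\<le>K. f (fst p, tg T K j) * wt T K j (snd p))\<bar>)"
    by (rule integral_abs_bound)
  also have "\<dots> \<le> integral\<^sup>L ?R (\<lambda>p. \<epsilon> * 1 + (2 * M) * h (fst p))"
  proof (rule integral_mono)
    show "integrable ?R (\<lambda>p. \<bar>f p - (\<Sum>j\<le>K. f (fst p, tg T K j) * wt T K j (snd p))\<bar>)"
      by (intro integrable_abs Bochner_Integration.integrable_diff fi gi)
    show "integrable ?R (\<lambda>p. \<epsilon> * 1 + (2 * M) * h (fst p))"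
      by (intro Bochner_Integration.integrable_add integrable_mult_right oi hi)
    fix p assume "p \<in> space ?R"
    then obtain x s where p: "p = (x, s)" and s: "0 \<le> s" "s \<le> T" using sp by auto
    show "\<bar>f p - (\<Sum>j\<le>K. f (fst p, tg T K j) * wt T K j (snd p))\<bar> \<le> \<epsilon> * 1 + (2 * M) * h (fst p)"
      unfolding p fst_conv snd_conv
      by (rule st_pointwise[OF T K s]) (use P s in auto)
  qed
  also have "\<dots> = \<epsilon> * integral\<^sup>L ?R (\<lambda>p. 1) + (2 * M) * integral\<^sup>L ?R (\<lambda>p. h (fst p))"
    unfolding Bochner_Integration.integral_add[OF integrable_mult_right[OF oi] integrable_mult_right[OF hi]]
    by (simp only: integral_mult_right_zero)
  also have "integral\<^sup>L ?R (\<lambda>p. 1::real) = integral\<^sup>L (\<sigma> T) (\<lambda>x. 1::real)"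
    by (rule st_int_fst[OF adm assoc T0]) simp
  also have "integral\<^sup>L ?R (\<lambda>p. h (fst p)) = integral\<^sup>L (\<sigma> T) h"
    using st_int_fst[OF adm assoc T0, of h] hc by (simp add: borel_measurable_continuous_onI)
  finally show ?thesis by simp
qed


definition hh :: "real \<Rightarrow> real \<Rightarrow> real" where
  "hh R x = min 1 (max 0 (\<bar>x\<bar> - R))"

lemma hh_cont: "continuous_on UNIV (hh R)"
  unfolding hh_def by (intro continuous_intros)

lemma hh_bounds: "0 \<le> hh R x" "hh R x \<le> 1"
  unfolding hh_def by auto

lemma adm_space: "admissible_family \<sigma> \<Longrightarrow> 0 \<le> t \<Longrightarrow> space (\<sigma> t) = UNIV"
  unfolding admissible_family_def using sets_eq_imp_space_eq[of "\<sigma> t" borel] by auto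

lemma adm_finite: "admissible_family \<sigma> \<Longrightarrow> 0 \<le> t \<Longrightarrow> finite_measure (\<sigma> t)"
  unfolding admissible_family_def by auto

lemma adm_meas: "admissible_family \<sigma> \<Longrightarrow> 0 \<le> t \<Longrightarrow> g \<in> borel_measurable borel \<Longrightarrow> g \<in> borel_measurable (\<sigma> t)"
  unfolding admissible_family_def using measurable_cong_sets[of "\<sigma> t" borel borel borel] by auto

lemma choose_R:
  assumes "admissible_family \<sigma>" "0 \<le> T" "0 < \<epsilon>"
  shows "\<exists>k::nat. integral\<^sup>L (\<sigma> T) (hh (real k)) < \<epsilon>"
proof -
  have "(\<lambda>k. integral\<^sup>L (\<sigma> T) (hh (real k))) \<longlonglongrightarrow> integral\<^sup>L (\<sigma> T) (\<lambda>x. 0::real)"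
  proof (rule integral_dominated_convergence[where w="\<lambda>x. 1"])
    show "(\<lambda>x. 0::real) \<in> borel_measurable (\<sigma> T)" by simp
    show "hh (real k) \<in> borel_measurable (\<sigma> T)" for k
      by (rule adm_meas[OF assms(1,2)]) (rule borel_measurable_continuous_onI[OF hh_cont])
    show "integrable (\<sigma> T) (\<lambda>x. 1::real)"
      using adm_finite[OF assms(1,2)] by (rule finite_measure.integrable_const)
    show "AE x in \<sigma> T. (\<lambda>k. hh (real k) x) \<longlonglongrightarrow> 0"
    proof (rule AE_I2, rule tendsto_eventually)
      fix x
      show "\<forall>\<^sub>F k in sequentially. hh (real k) x = 0"
      proof (rule eventually_sequentiallyI[of "nat \<lceil>\<bar>x\<bar>\<rceil>"])
        fix k assume "nat \<lceil>\<bar>x\<bar>\<rceil> \<le> k"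
        then have "real (nat \<lceil>\<bar>x\<bar>\<rceil>) \<le> real k" by (simp only: of_nat_le_iff)
        moreover have "\<bar>x\<bar> \<le> real (nat \<lceil>\<bar>x\<bar>\<rceil>)" by (rule real_nat_ceiling_ge)
        ultimately have "\<bar>x\<bar> \<le> real k" by linarith
        then show "hh (real k) x = 0" unfolding hh_def by simp
      qed
    qed
    show "AE x in \<sigma> T. norm (hh (real k) x) \<le> 1" for k
      by (rule AE_I2) (use hh_bounds in auto)
  qed
  then have "(\<lambda>k. integral\<^sup>L (\<sigma> T) (hh (real k))) \<longlonglongrightarrow> 0" by simp
  from order_tendstoD(2)[OF this assms(3)] obtain k where "integral\<^sup>L (\<sigma> T) (hh (real k)) < \<epsilon>"
    by (auto simp: eventually_sequentially)
  then show ?thesis by blast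
qed


lemma forward:
  fixes f :: "real \<times> real \<Rightarrow> real"
  assumes adm: "admissible_family \<sigma>" and admn: "\<And>n. admissible_family (\<sigma>n n)"
    and assoc: "associated_space_time_measure \<sigma> \<Sigma>"
    and assocn: "\<And>n. associated_space_time_measure (\<sigma>n n) (\<Sigma>n n)"
    and H: "\<And>t (\<phi>::real\<Rightarrow>real). 0 \<le> t \<Longrightarrow> continuous_on UNIV \<phi> \<Longrightarrow> bounded (range \<phi>) \<Longrightarrow>
              (\<lambda>n. integral\<^sup>L (\<sigma>n n t) \<phi>) \<longlonglongrightarrow> integral\<^sup>L (\<sigma> t) \<phi>"
    and T: "0 < T"
    and cf: "continuous_on (UNIV \<times> {0..T}) f"
    and fb: "\<And>p. p \<in> UNIV \<times> {0..T} \<Longrightarrow> \<bar>f p\<bar> \<le> M"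
  shows "(\<lambda>n. integral\<^sup>L (restrict_space (\<Sigma>n n) (UNIV \<times> {0..T})) f)
           \<longlonglongrightarrow> integral\<^sup>L (restrict_space \<Sigma> (UNIV \<times> {0..T})) f"
proof (rule LIMSEQ_I)
  fix r :: real assume r: "0 < r"
  have T0: "0 \<le> T" using T by simp
  have M0: "0 \<le> M" using fb[of "(0, 0)"] T by auto
  define m where "m = integral\<^sup>L (\<sigma> T) (\<lambda>x. 1::real)"
  have m0: "0 \<le> m" unfolding m_def by (rule Bochner_Integration.integral_nonneg) simp
  define \<epsilon> where "\<epsilon> = r / (2 * m + 4 * M + 4)"
  have den: "0 < 2 * m + 4 * M + 4" using m0 M0 by simp
  have e0: "0 < \<epsilon>" unfolding \<epsilon>_def using r den by simp
  have er: "\<epsilon> * (2 * m + 4 * M + 4) = r" unfolding \<epsilon>_def using den by simp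
  obtain k :: nat where hk: "integral\<^sup>L (\<sigma> T) (hh (real k)) < \<epsilon>"
    using choose_R[OF adm T0 e0] by blast
  define h where "h = hh (real k)"
  define C where "C = {-(real k + 1)..real k + 1} \<times> {0..T}"
  have "compact C" unfolding C_def by (intro compact_Times compact_Icc)
  moreover have "continuous_on C f" using cf by (rule continuous_on_subset) (auto simp: C_def)
  ultimately have "uniformly_continuous_on C f" by (intro compact_uniformly_continuous)
  then obtain \<delta> where d0: "\<delta> > 0"
    and dC: "\<And>p q. p \<in> C \<Longrightarrow> q \<in> C \<Longrightarrow> dist q p < \<delta> \<Longrightarrow> dist (f q) (f p) < \<epsilon>"
    unfolding uniformly_continuous_on_def using e0 by metis
  obtain K :: nat where K: "T / \<delta> < real K" using reals_Archimedean2 by blast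
  have K0: "0 < K" using K T d0 by (cases "K = 0") (auto simp: field_simps)
  have TK: "T / real K < \<delta>" using K K0 d0 by (simp add: field_simps)
  have P: "\<bar>f (x, s) - f (x, tg T K j)\<bar> \<le> \<epsilon> + 2 * M * h x"
    if s: "0 \<le> s" "s \<le> T" and j: "j \<le> K" and st: "\<bar>s - tg T K j\<bar> \<le> T / real K" for x s j
  proof (cases "\<bar>x\<bar> \<le> real k + 1")
    case True
    have "(x, s) \<in> C" "(x, tg T K j) \<in> C"
      using True s tg_nonneg[OF T0] tg_le[OF T0 j] by (auto simp: C_def)
    moreover have "dist (x, s) (x, tg T K j) < \<delta>"
      using st TK by (simp add: dist_Pair_Pair dist_real_def)
    ultimately have "dist (f (x, s)) (f (x, tg T K j)) < \<epsilon>" using dC by blast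
    moreover have "0 \<le> 2 * M * h x" using M0 hh_bounds by (simp add: h_def)
    ultimately show ?thesis by (simp add: dist_real_def)
  next
    case False
    then have "h x = 1" unfolding h_def hh_def by auto
    moreover have "\<bar>f (x, s)\<bar> \<le> M" "\<bar>f (x, tg T K j)\<bar> \<le> M"
      using fb s tg_nonneg[OF T0] tg_le[OF T0 j] by auto
    ultimately show ?thesis using e0 by simp
  qed
  note hcont = hh_cont[of "real k", folded h_def]
  have hb: "\<And>x. 0 \<le> h x" "\<And>x. h x \<le> 1" using hh_bounds by (auto simp: h_def)
  define G where "G = (\<Sum>j\<le>K. integral\<^sup>L (restrict_space \<Sigma> (UNIV \<times> {0..T})) (\<lambda>p. f (fst p, tg T K j) * wt T K j (snd p)))"
  define Gn where "Gn n = (\<Sum>j\<le>K. integral\<^sup>L (restrict_space (\<Sigma>n n) (UNIV \<times> {0..T})) (\<lambda>p. f (fst p, tg T K j) * wt T K j (snd p)))" for n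
  define I where "I = integral\<^sup>L (restrict_space \<Sigma> (UNIV \<times> {0..T})) f"
  define In where "In n = integral\<^sup>L (restrict_space (\<Sigma>n n) (UNIV \<times> {0..T})) f" for n
  define mn where "mn n = integral\<^sup>L (\<sigma>n n T) (\<lambda>x. 1::real)" for n
  define Hl where "Hl = integral\<^sup>L (\<sigma> T) h"
  define Hn where "Hn n = integral\<^sup>L (\<sigma>n n T) h" for n
  have A: "\<bar>I - G\<bar> \<le> \<epsilon> * m + 2 * M * Hl"
    unfolding I_def G_def m_def Hl_def
    by (rule st_approx[OF adm assoc T K0 cf fb hcont hb less_imp_le[OF e0] P]) auto
  have An: "\<bar>In n - Gn n\<bar> \<le> \<epsilon> * mn n + 2 * M * Hn n" for n
    unfolding In_def Gn_def mn_def Hn_def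
    by (rule st_approx[OF admn assocn T K0 cf fb hcont hb less_imp_le[OF e0] P]) auto
  have phic: "continuous_on UNIV (\<lambda>x. f (x, tg T K j))" if j: "j \<le> K" for j
    by (rule continuous_on_compose2[OF cf, of UNIV "\<lambda>x. (x, tg T K j)"])
       (auto intro!: continuous_intros simp: tg_nonneg[OF T0] tg_le[OF T0 j])
  have phib: "\<bar>f (x, tg T K j)\<bar> \<le> M" if j: "j \<le> K" for j x
    using fb tg_nonneg[OF T0] tg_le[OF T0 j] by auto
  have phibd: "bounded (range (\<lambda>x. f (x, tg T K j)))" if j: "j \<le> K" for j
    unfolding bounded_iff using phib[OF j] by auto
  have Gconv: "Gn \<longlonglongrightarrow> G"
    unfolding Gn_def G_def
  proof (rule tendsto_sum)
    fix j assume "j \<in> {..K}"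
    then have j: "j \<le> K" by simp
    show "(\<lambda>n. integral\<^sup>L (restrict_space (\<Sigma>n n) (UNIV \<times> {0..T})) (\<lambda>p. f (fst p, tg T K j) * wt T K j (snd p)))
        \<longlonglongrightarrow> integral\<^sup>L (restrict_space \<Sigma> (UNIV \<times> {0..T})) (\<lambda>p. f (fst p, tg T K j) * wt T K j (snd p))"
      unfolding st_term[OF admn assocn T0 j phic[OF j] phib[OF j]] st_term[OF adm assoc T0 j phic[OF j] phib[OF j]]
      using H[OF tg_nonneg[OF T0] phic[OF j] phibd[OF j]]
      by (auto intro!: tendsto_diff H[OF tg_nonneg[OF T0] phic[OF j] phibd[OF j]])
  qed
  have mconv: "mn \<longlonglongrightarrow> m" unfolding mn_def m_def
    by (rule H[OF T0]) (auto intro: continuous_intros)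
  have Hconv: "Hn \<longlonglongrightarrow> Hl" unfolding Hn_def Hl_def
    by (rule H[OF T0 hcont]) (use hb in \<open>auto simp: bounded_iff\<close>)
  have HlE: "Hl < \<epsilon>" unfolding Hl_def h_def using hk .
  obtain N1 where N1: "\<And>n. n \<ge> N1 \<Longrightarrow> mn n < m + 1"
    using order_tendstoD(2)[OF mconv, of "m + 1"] by (auto simp: eventually_sequentially)
  obtain N2 where N2: "\<And>n. n \<ge> N2 \<Longrightarrow> Hn n < \<epsilon>"
    using order_tendstoD(2)[OF Hconv HlE] by (auto simp: eventually_sequentially)
  obtain N3 where N3: "\<And>n. n \<ge> N3 \<Longrightarrow> norm (Gn n - G) < \<epsilon>"
    using LIMSEQ_D[OF Gconv e0] by blast
  show "\<exists>no. \<forall>n\<ge>no. norm (In n - I) < r"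
  proof (intro exI allI impI)
    fix n assume n: "max N1 (max N2 N3) \<le> n"
    have a1: "\<epsilon> * mn n \<le> \<epsilon> * (m + 1)" using N1[of n] n e0 by (intro mult_left_mono) auto
    have a2: "2 * M * Hn n \<le> 2 * M * \<epsilon>" using N2[of n] n M0 by (intro mult_left_mono) auto
    have a3: "2 * M * Hl \<le> 2 * M * \<epsilon>" using HlE M0 by (intro mult_left_mono) auto
    have a4: "\<bar>Gn n - G\<bar> < \<epsilon>" using N3[of n] n by simp
    have "\<bar>In n - I\<bar> \<le> \<bar>In n - Gn n\<bar> + \<bar>Gn n - G\<bar> + \<bar>I - G\<bar>" by linarith
    also have "\<dots> < \<epsilon> * (2 * m + 4 * M + 4)"
      using An[of n] A a1 a2 a3 a4 e0 by (simp add: algebra_simps)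
    finally show "norm (In n - I) < r" using er by simp
  qed
qed


theorem proposition3p9:
  fixes \<sigma> :: "real \<Rightarrow> real measure"
    and \<sigma>n :: "nat \<Rightarrow> real \<Rightarrow> real measure"
    and \<Sigma> :: "(real \<times> real) measure"
    and \<Sigma>n :: "nat \<Rightarrow> (real \<times> real) measure"
  assumes "admissible_family \<sigma>"
    and "\<And>n. admissible_family (\<sigma>n n)"
    and "associated_space_time_measure \<sigma> \<Sigma>"
    and "\<And>n. associated_space_time_measure (\<sigma>n n) (\<Sigma>n n)"
  shows "(\<forall>t\<ge>0. weak_conv_finite (\<lambda>n. \<sigma>n n t) (\<sigma> t)) \<longleftrightarrow>
         (\<forall>T>0. weak_conv_finite (\<lambda>n. restrict_space (\<Sigma>n n) (UNIV \<times> {0..T}))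
                                  (restrict_space \<Sigma> (UNIV \<times> {0..T})))"
proof
  assume H0: "\<forall>t\<ge>0. weak_conv_finite (\<lambda>n. \<sigma>n n t) (\<sigma> t)"
  have H: "(\<lambda>n. integral\<^sup>L (\<sigma>n n t) \<phi>) \<longlonglongrightarrow> integral\<^sup>L (\<sigma> t) \<phi>"
    if "0 \<le> t" "continuous_on UNIV \<phi>" "bounded (range \<phi>)" for t and \<phi> :: "real \<Rightarrow> real"
    using H0 that adm_space[OF assms(1) that(1)] unfolding weak_conv_finite_def by auto
  show "\<forall>T>0. weak_conv_finite (\<lambda>n. restrict_space (\<Sigma>n n) (UNIV \<times> {0..T}))
                                  (restrict_space \<Sigma> (UNIV \<times> {0..T}))"
  proof (intro allI impI)
    fix T :: real assume T: "0 < T"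
    show "weak_conv_finite (\<lambda>n. restrict_space (\<Sigma>n n) (UNIV \<times> {0..T})) (restrict_space \<Sigma> (UNIV \<times> {0..T}))"
      unfolding weak_conv_finite_def st_sp[OF assms(3)]
    proof (intro allI impI, elim conjE)
      fix f :: "real \<times> real \<Rightarrow> real"
      assume cf: "continuous_on (UNIV \<times> {0..T}) f" and bf: "bounded (f ` (UNIV \<times> {0..T}))"
      then obtain M where "\<forall>y\<in>f ` (UNIV \<times> {0..T}). norm y \<le> M" unfolding bounded_iff by blast
      then have fb: "\<And>p. p \<in> UNIV \<times> {0..T} \<Longrightarrow> \<bar>f p\<bar> \<le> M" by auto
      show "(\<lambda>n. integral\<^sup>L (restrict_space (\<Sigma>n n) (UNIV \<times> {0..T})) f)
           \<longlonglongrightarrow> integral\<^sup>L (restrict_space \<Sigma> (UNIV \<times> {0..T})) f"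
        by (rule forward[OF assms H T cf fb])
    qed
  qed
next
  assume H0: "\<forall>T>0. weak_conv_finite (\<lambda>n. restrict_space (\<Sigma>n n) (UNIV \<times> {0..T}))
                                  (restrict_space \<Sigma> (UNIV \<times> {0..T}))"
  show "\<forall>t\<ge>0. weak_conv_finite (\<lambda>n. \<sigma>n n t) (\<sigma> t)"
  proof (intro allI impI)
    fix t :: real assume t: "0 \<le> t"
    show "weak_conv_finite (\<lambda>n. \<sigma>n n t) (\<sigma> t)"
      unfolding weak_conv_finite_def adm_space[OF assms(1) t]
    proof (intro allI impI, elim conjE)
      fix \<phi> :: "real \<Rightarrow> real"
      assume c: "continuous_on UNIV \<phi>" and b: "bounded (range \<phi>)"
      have pm: "\<phi> \<in> borel_measurable borel" using c by (rule borel_measurable_continuous_onI)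
      show "(\<lambda>n. integral\<^sup>L (\<sigma>n n t) \<phi>) \<longlonglongrightarrow> integral\<^sup>L (\<sigma> t) \<phi>"
      proof (cases "t = 0")
        case True
        then show ?thesis using adm_zero[OF assms(1)] adm_zero[OF assms(2)] by simp
      next
        case False
        then have tp: "0 < t" using t by simp
        have "(\<lambda>n. integral\<^sup>L (restrict_space (\<Sigma>n n) (UNIV \<times> {0..t})) (\<lambda>p. \<phi> (fst p)))
            \<longlonglongrightarrow> integral\<^sup>L (restrict_space \<Sigma> (UNIV \<times> {0..t})) (\<lambda>p. \<phi> (fst p))"
        proof -
          have "continuous_on (UNIV \<times> {0..t}) (\<lambda>p. \<phi> (fst p))"
            by (intro continuous_on_compose2[OF c] continuous_intros) auto
          moreover have "bounded ((\<lambda>p. \<phi> (fst p)) ` (UNIV \<times> {0..t}))"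
            by (rule bounded_subset[OF b]) auto
          ultimately show ?thesis
            using H0 tp unfolding weak_conv_finite_def st_sp[OF assms(3)] by auto
        qed
        then show ?thesis
          unfolding st_int_fst[OF assms(1,3) t pm] st_int_fst[OF assms(2,4) t pm] .
      qed
    qed
  qed
qed

end
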